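(* Let $k\ge 2$ be even and $i\in\{1,\ldots,k-1\}$ such that $\binom{k}{i}$ and $\binom{k-1}{i}$ are both odd. Then $$S=\sum_{\substack{0\le \ell\le k-i-2\\ \ell\text{ even}}}\binom{k-i}{\ell}\binom{i-2}{k-i-\ell-2}^2$$ is odd.
   Context: Convention: for integers $a,b$, $\binom{a}{b}=0$ unless $0\le b\le a$. *)

theory Defs
  imports Main
begin

definition binom :: "int \<Rightarrow> int \<Rightarrow> nat" where
  "binom a b = (if 0 \<le> b \<and> b \<le> a then nat a choose nat b else 0)"

end

theory Submission
  imports Defs
begin

lemma binom_nat: "binom (int a) (int b) = a choose b"
  by (simp add: binom_def)

lemma even_choose_odd: "even (a::nat) \<Longrightarrow> odd b \<Longrightarrow> even (a choose b)"
proof -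
  assume a: "even a" and b: "odd b"
  then have "b > 0" by (cases b) auto
  then have "b * (a choose b) = a * ((a - 1) choose (b - 1))" by (rule times_binomial_minus1_eq)
  then have "even (b * (a choose b))" using a by simp
  then show ?thesis using b by (simp add: even_mult_iff)
qed

lemma even_sum_cong:
  assumes "finite A" "\<And>x. x \<in> A \<Longrightarrow> even (f x :: nat) = even (g x)"
  shows "even (sum f A) = even (sum g A)"
  using assms by (induction A rule: finite_induct) auto

theorem mainTheorem11:
  fixes k i :: nat
  assumes "k \<ge> 2" and "even k" and "1 \<le> i" and "i \<le> k - 1"
    and "odd (k choose i)" and "odd ((k - 1) choose i)"
  shows "odd (\<Sum>l \<in> {l::int. 0 \<le> l \<and> l \<le> int k - int i - 2 \<and> even l}.
           binom (int k - int i) l * (binom (int i - 2) (int k - int i - l - 2))^2)"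
proof -
  have ie: "even i"
  proof (rule ccontr)
    assume "odd i"
    then have "even (k choose i)" using even_choose_odd assms(2) by blast
    then show False using assms(5) by simp
  qed
  have i2: "i \<ge> 2" using ie assms(3) by presburger
  have ik: "i \<le> k - 2" using ie assms(2,4) by presburger
  define n where "n = k - i"
  define m where "m = i - 2"
  define E where "E = {l::nat. l \<le> n - 2 \<and> even l}"
  define g where "g l = (n choose l) * (m choose (n - 2 - l))" for l
  have ne: "even n" "n \<ge> 2" using ie assms(1,2) ik unfolding n_def by auto
  have set_eq: "{l::int. 0 \<le> l \<and> l \<le> int k - int i - 2 \<and> even l} = int ` E"
  proof (rule set_eqI, rule iffI)
    fix x assume "x \<in> {l::int. 0 \<le> l \<and> l \<le> int k - int i - 2 \<and> even l}"
    then have x: "0 \<le> x" "x \<le> int k - int i - 2" "even x" by auto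
    have "nat x \<in> E" using x ik unfolding E_def n_def by (auto simp: even_nat_iff)
    moreover have "x = int (nat x)" using x by simp
    ultimately show "x \<in> int ` E" by blast
  next
    fix x assume "x \<in> int ` E"
    then show "x \<in> {l::int. 0 \<le> l \<and> l \<le> int k - int i - 2 \<and> even l}"
      using ik assms(1) unfolding E_def n_def by force
  qed
  have S: "(\<Sum>l \<in> {l::int. 0 \<le> l \<and> l \<le> int k - int i - 2 \<and> even l}.
           binom (int k - int i) l * (binom (int i - 2) (int k - int i - l - 2))^2)
         = (\<Sum>l\<in>E. (n choose l) * (m choose (n - 2 - l))^2)"
    unfolding set_eq
  proof (subst sum.reindex, simp)
    show "(\<Sum>l\<in>E. ((\<lambda>l. binom (int k - int i) l * (binom (int i - 2) (int k - int i - l - 2))\<^sup>2) \<circ> int) l)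
      = (\<Sum>l\<in>E. (n choose l) * (m choose (n - 2 - l))\<^sup>2)"
    proof (rule sum.cong[OF refl])
      fix l assume "l \<in> E"
      then have l: "l \<le> n - 2" unfolding E_def by auto
      have 1: "int k - int i = int n" using ik unfolding n_def by simp
      have 2: "int i - 2 = int m" using i2 unfolding m_def by simp
      have 3: "int k - int i - int l - 2 = int (n - 2 - l)" using ik l assms(1) unfolding n_def by force
      have 4: "int n - int l - 2 = int (n - 2 - l)" using ik l assms(1) unfolding n_def by force
      show "((\<lambda>l. binom (int k - int i) l * (binom (int i - 2) (int k - int i - l - 2))\<^sup>2) \<circ> int) l
        = (n choose l) * (m choose (n - 2 - l))\<^sup>2"
        by (simp only: comp_def 1 2 3 4 binom_nat)
    qed
  qed
  have finE: "finite E" unfolding E_def by auto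
  have P1: "even (\<Sum>l\<in>E. (n choose l) * (m choose (n - 2 - l))^2) = even (sum g E)"
    by (rule even_sum_cong[OF finE]) (simp add: g_def power2_eq_square even_mult_iff)
  have EA: "E \<subseteq> {..n-2}" unfolding E_def by auto
  have split: "sum g {..n-2} = sum g E + sum g ({..n-2} - E)"
    using sum.subset_diff[OF EA] by (simp add: add.commute)
  have oddpart: "even (sum g ({..n-2} - E))"
    by (rule dvd_sum) (auto simp: E_def g_def even_choose_odd[OF ne(1)])
  have V: "sum g {..n-2} = (n + m) choose (n - 2)"
    unfolding g_def using vandermonde[of n m "n-2"] by (simp add: numeral_2_eq_2)
  have nm: "n + m = k - 2" "n - 2 = (k - 2) - i" using ik i2 unfolding n_def m_def by auto
  have sym: "(k - 2) choose ((k - 2) - i) = (k - 2) choose i"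
    using ik binomial_symmetric[of i "k-2"] by (simp add: numeral_2_eq_2)
  have pas: "(k - 1) choose i = ((k - 2) choose (i - 1)) + ((k - 2) choose i)"
  proof -
    have "k - 1 = Suc (k - 2)" "i = Suc (i - 1)" using assms(1) i2 by auto
    then show ?thesis by (metis binomial_Suc_Suc)
  qed
  have ev1: "even ((k - 2) choose (i - 1))"
    using even_choose_odd[of "k-2" "i-1"] assms(2,1) ie i2 by (simp add: even_diff_nat)
  have oddk2: "odd ((k - 2) choose i)" using pas ev1 assms(6) by simp
  have "odd (sum g {..n-2})" using V nm sym oddk2 by simp
  then have "odd (sum g E)" using split oddpart by simp
  then show ?thesis using S P1 by simp
qed

end
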